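(* Given a homogeneous basis $\{x^p\}$ of $H^\ast$ with respect to $H^\ast=H_i^\ast\oplus H_v^\ast\oplus H_g^\ast$, there is an isomorphism of vector spaces \[ \mathrm{Br}\llbracket H^\ast\rrbracket\cong k\llbracket x^p\rrbracket/\mathcal I, \] where $\mathcal I$ is the ideal generated by $\{x_v^px_g^q\}$ (products of a basis element of $H_v^\ast$ with a basis element of $H_g^\ast$).
   Context: $G=\mathbb{Z}/2\mathbb{Z}=\{e,g\}$, $k$ a field of characteristic zero. $(H,\rho)$ is a finite dimensional self-invariant $\mathbb{Z}/2\mathbb{Z}$-graded $\mathbb{Z}/2\mathbb{Z}$-module ($g$ acts trivially on $H_g$), so $H=H_i\oplus H_v\oplus H_g$ where $H_e=H_i\oplus H_v$, $g$ acts trivially on $H_i$ and by $-1$ on $H_v$; $H^G=H_i\oplus H_g$. $B_n$ acts on $H^{\otimes n}$ through the braiding $v\otimes w\mapsto(h\cdot w)\otimes v$ for $v\in H_h$, and $\mathrm{Br}\llbracket H^\ast\rrbracket=\prod_n\mathrm{Br}^nH^\ast$ with $\mathrm{Br}^nH^\ast$ the $B_n$-invariant $n$-linear forms. The isomorphism uses the identification of symmetric $n$-linear forms with homogeneous polynomials of degree $n$ (subscripts on $x^p$ indicate the summand $i,v,g$). *)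

theory Defs
  imports Complex_Main
begin

text \<open>Hi, Hv, Hg are the three summands; H_e = H_i + H_v is the degree-e part,
  Hg the degree-g part.  The generator g of G acts by rho.\<close>

definition sum_sp :: "'h::ab_group_add set \<Rightarrow> 'h set \<Rightarrow> 'h set" where
  "sum_sp A B = {a + b | a b. a \<in> A \<and> b \<in> B}"

definition direct_sum3 :: "'h::ab_group_add set \<Rightarrow> 'h set \<Rightarrow> 'h set \<Rightarrow> bool" where
  "direct_sum3 A B C \<longleftrightarrow>
     (\<forall>h. \<exists>!(a, b, c). a \<in> A \<and> b \<in> B \<and> c \<in> C \<and> h = a + b + c)"

text \<open>Linear functionals on H lying in the summand S^* of H^* = H_i^* + H_v^* + H_g^*
  (functionals vanishing on the two complementary summands).\<close>
definition dual_part :: "('k::field \<Rightarrow> 'h::ab_group_add \<Rightarrow> 'h) \<Rightarrow> 'h set \<Rightarrow> 'h set \<Rightarrow> ('h \<Rightarrow> 'k) set"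
  where "dual_part scale A B =
     {f. Vector_Spaces.linear scale (*) f \<and> (\<forall>h \<in> A \<union> B. f h = 0)}"

definition dual_basis :: "('k::field \<Rightarrow> 'h::ab_group_add \<Rightarrow> 'h) \<Rightarrow> ('p::finite \<Rightarrow> 'h \<Rightarrow> 'k) \<Rightarrow> bool"
  where "dual_basis scale x \<longleftrightarrow>
     (\<forall>p. Vector_Spaces.linear scale (*) (x p)) \<and>
     (\<forall>f. Vector_Spaces.linear scale (*) f \<longrightarrow>
          (\<exists>!c :: 'p \<Rightarrow> 'k. f = (\<lambda>h. \<Sum>p\<in>UNIV. c p * x p h)))"

definition multilinear_form ::
  "('k::field \<Rightarrow> 'h::ab_group_add \<Rightarrow> 'h) \<Rightarrow> nat \<Rightarrow> ('h list \<Rightarrow> 'k) \<Rightarrow> bool" where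
  "multilinear_form scale n f \<longleftrightarrow>
     (\<forall>vs. length vs \<noteq> n \<longrightarrow> f vs = 0) \<and>
     (\<forall>vs j. length vs = n \<longrightarrow> j < n \<longrightarrow>
        Vector_Spaces.linear scale (*) (\<lambda>v. f (vs[j := v])))"

text \<open>Invariance under the standard generator sigma_j (j+1 < n) of B_n, which acts on
  H^{\<otimes>n} by the braiding c(v \<otimes> w) = (h.w) \<otimes> v for v in H_h on the tensor
  factors j, j+1.  Invariance under B_n is invariance under all generators.
  Since the form is multilinear it suffices to test on pure tensors whose j-th
  entry is homogeneous (degree e: H_i + H_v, acting trivially; degree g: H_g,
  acting by rho).\<close>
definition braid_invariant ::
  "'h::ab_group_add set \<Rightarrow> 'h set \<Rightarrow> 'h set \<Rightarrow> ('h \<Rightarrow> 'h) \<Rightarrow> nat \<Rightarrow> ('h list \<Rightarrow> 'k) \<Rightarrow> bool" where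
  "braid_invariant Hi Hv Hg rho n f \<longleftrightarrow>
     (\<forall>j vs. Suc j < n \<longrightarrow> length vs = n \<longrightarrow>
        (vs ! j \<in> sum_sp Hi Hv \<longrightarrow>
           f (vs[j := vs ! Suc j, Suc j := vs ! j]) = f vs) \<and>
        (vs ! j \<in> Hg \<longrightarrow>
           f (vs[j := rho (vs ! Suc j), Suc j := vs ! j]) = f vs))"

definition Br_n ::
  "('k::field \<Rightarrow> 'h::ab_group_add \<Rightarrow> 'h) \<Rightarrow> 'h set \<Rightarrow> 'h set \<Rightarrow> 'h set \<Rightarrow> ('h \<Rightarrow> 'h)
    \<Rightarrow> nat \<Rightarrow> ('h list \<Rightarrow> 'k) set" where
  "Br_n scale Hi Hv Hg rho n =
     {f. multilinear_form scale n f \<and> braid_invariant Hi Hv Hg rho n f}"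

definition Br_series ::
  "('k::field \<Rightarrow> 'h::ab_group_add \<Rightarrow> 'h) \<Rightarrow> 'h set \<Rightarrow> 'h set \<Rightarrow> 'h set \<Rightarrow> ('h \<Rightarrow> 'h)
    \<Rightarrow> (nat \<Rightarrow> 'h list \<Rightarrow> 'k) set" where
  "Br_series scale Hi Hv Hg rho = {F. \<forall>n. F n \<in> Br_n scale Hi Hv Hg rho n}"

type_synonym ('p, 'k) mps = "('p \<Rightarrow> nat) \<Rightarrow> 'k"

definition mps_add :: "('p, 'k::comm_ring_1) mps \<Rightarrow> ('p, 'k) mps \<Rightarrow> ('p, 'k) mps" where
  "mps_add a b = (\<lambda>m. a m + b m)"

definition mps_mult :: "('p::finite, 'k::comm_ring_1) mps \<Rightarrow> ('p, 'k) mps \<Rightarrow> ('p, 'k) mps" where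
  "mps_mult a b = (\<lambda>m. \<Sum>m1 \<in> {m1. \<forall>p. m1 p \<le> m p}. a m1 * b (\<lambda>p. m p - m1 p))"

definition mps_X2 :: "'p \<Rightarrow> 'p \<Rightarrow> ('p, 'k::comm_ring_1) mps" where
  "mps_X2 p q = (\<lambda>m. if m = (\<lambda>r. (if r = p then 1 else 0) + (if r = q then 1 else 0))
                      then 1 else 0)"

definition mps_ideal :: "('p::finite, 'k::comm_ring_1) mps set \<Rightarrow> bool" where
  "mps_ideal J \<longleftrightarrow> (\<lambda>_. 0) \<in> J \<and> (\<forall>a\<in>J. \<forall>b\<in>J. mps_add a b \<in> J) \<and>
                   (\<forall>a\<in>J. \<forall>r. mps_mult r a \<in> J)"

definition mps_ideal_gen :: "('p::finite, 'k::comm_ring_1) mps set \<Rightarrow> ('p, 'k) mps set" where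
  "mps_ideal_gen S = \<Inter>{J. mps_ideal J \<and> S \<subseteq> J}"

definition ideal_I :: "('p::finite \<Rightarrow> 'h \<Rightarrow> 'k::field) \<Rightarrow> ('k \<Rightarrow> 'h::ab_group_add \<Rightarrow> 'h)
    \<Rightarrow> 'h set \<Rightarrow> 'h set \<Rightarrow> 'h set \<Rightarrow> ('p, 'k) mps set" where
  "ideal_I x scale Hi Hv Hg = mps_ideal_gen
     {mps_X2 p q | p q. x p \<in> dual_part scale Hi Hg \<and> x q \<in> dual_part scale Hi Hv}"

end

theory Submission
  imports Defs "HOL-Library.Multiset"
begin

lemma vs_self: "vector_space ((*) :: 'k::field \<Rightarrow> 'k \<Rightarrow> 'k)"
  by unfold_locales (auto simp: algebra_simps)

locale P5 =
  fixes scale :: "'k::field_char_0 \<Rightarrow> 'h::ab_group_add \<Rightarrow> 'h"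
    and Hi Hv Hg :: "'h set"
    and rho :: "'h \<Rightarrow> 'h"
    and x :: "'p::finite \<Rightarrow> 'h \<Rightarrow> 'k"
  assumes vs: "vector_space scale"
    and fin: "\<exists>B. finite B \<and> module.span scale B = UNIV"
    and sub_i: "module.subspace scale Hi"
    and sub_v: "module.subspace scale Hv"
    and sub_g: "module.subspace scale Hg"
    and dsum: "direct_sum3 Hi Hv Hg"
    and rho_lin: "Vector_Spaces.linear scale scale rho"
    and rho_i: "\<forall>h\<in>Hi. rho h = h"
    and rho_v: "\<forall>h\<in>Hv. rho h = - h"
    and rho_g: "\<forall>h\<in>Hg. rho h = h"
    and basis: "dual_basis scale x"
    and homog: "\<forall>p. x p \<in> dual_part scale Hv Hg \<or> x p \<in> dual_part scale Hi Hg
                    \<or> x p \<in> dual_part scale Hi Hv"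

sublocale P5 \<subseteq> V: vector_space scale by (rule vs)

context P5 begin

definition lin :: "('h \<Rightarrow> 'k) \<Rightarrow> bool" where
  "lin f \<longleftrightarrow> Vector_Spaces.linear scale (*) f"

lemma lin_iff: "lin f \<longleftrightarrow> (\<forall>a b. f (a + b) = f a + f b) \<and> (\<forall>c a. f (scale c a) = c * f a)"
  by (simp add: lin_def Vector_Spaces.linear_iff vs vs_self)

lemma lin_add: "lin f \<Longrightarrow> f (a + b) = f a + f b" by (simp add: lin_iff)
lemma lin_scale: "lin f \<Longrightarrow> f (scale c a) = c * f a" by (simp add: lin_iff)
lemma lin_zero: "lin f \<Longrightarrow> f 0 = 0"
  using lin_add[of f 0 0] by simp
lemma lin_neg: "lin f \<Longrightarrow> f (- a) = - f a"
proof -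
  assume l: "lin f"
  have "f a + f (- a) = 0" using lin_add[OF l, of a "-a"] lin_zero[OF l] by simp
  then show ?thesis by (simp add: add_eq_0_iff)
qed
lemma lin_sum: "lin f \<Longrightarrow> f (\<Sum>i\<in>I. g i) = (\<Sum>i\<in>I. f (g i))"
  by (induction I rule: infinite_finite_induct) (auto simp: lin_zero lin_add)

lemma x_lin: "lin (x p)" using basis unfolding dual_basis_def lin_def by auto

lemma dual_part_lin: "f \<in> dual_part scale A B \<Longrightarrow> lin f"
  unfolding dual_part_def lin_def by auto

lemma basis_ex1: "lin f \<Longrightarrow> \<exists>!c. f = (\<lambda>h. \<Sum>p\<in>UNIV. c p * x p h)"
  using basis unfolding dual_basis_def lin_def by blast

lemma basis_ex: "lin f \<Longrightarrow> \<exists>c. f = (\<lambda>h. \<Sum>p\<in>UNIV. c p * x p h)"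
  using basis_ex1 by blast

lemma basis_unique: "(\<lambda>h. \<Sum>p\<in>UNIV. c1 p * x p h) = (\<lambda>h. \<Sum>p\<in>UNIV. c2 p * x p h) \<Longrightarrow> c1 = c2"
proof -
  assume eq: "(\<lambda>h. \<Sum>p\<in>UNIV. c1 p * x p h) = (\<lambda>h. \<Sum>p\<in>UNIV. c2 p * x p h)"
  let ?f = "(\<lambda>h. \<Sum>p\<in>UNIV. c1 p * x p h)"
  have "lin ?f" unfolding lin_iff
  proof (intro conjI allI)
    fix a b show "?f (a + b) = ?f a + ?f b"
      by (simp add: lin_add[OF x_lin] distrib_left sum.distrib)
  next
    fix c a show "?f (scale c a) = c * ?f a"
      by (simp add: lin_scale[OF x_lin] sum_distrib_left mult.left_commute)
  qed
  from basis_ex1[OF this] obtain c where c: "\<And>c'. ?f = (\<lambda>h. \<Sum>p\<in>UNIV. c' p * x p h) \<Longrightarrow> c' = c"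
    by blast
  have "c1 = c" by (rule c) (rule refl)
  moreover have "c2 = c" by (rule c) (rule eq)
  ultimately show ?thesis by simp
qed

lemma dual_vectors: "\<exists>e0. \<forall>p q. x q (e0 p) = (if q = p then 1 else 0)"
proof -
  obtain S where S: "finite S" "V.span S = UNIV" using fin by auto
  obtain B where B: "B \<subseteq> S" "V.independent B" "S \<subseteq> V.span B"
    using V.maximal_independent_subset[of S] by blast
  have finB: "finite B" using finite_subset[OF B(1) S(1)] .
  have spanB: "V.span B = UNIV"
    using V.span_mono[OF B(3)] S(2) V.span_span by auto
  define r where "r b h = V.representation B h b" for b h
  have rlin: "lin (r b)" for b unfolding lin_def r_def
    by (rule V.linear_representation[OF B(2) spanB])
  have "\<forall>b. \<exists>c. r b = (\<lambda>h. \<Sum>p\<in>UNIV. c p * x p h)"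
    using basis_ex rlin by blast
  then obtain C where C: "\<And>b. r b = (\<lambda>h. \<Sum>p\<in>UNIV. C b p * x p h)" by metis
  have expand: "h = (\<Sum>b\<in>B. scale (r b h) b)" for h
    unfolding r_def using V.sum_representation_eq[OF B(2) _ finB] spanB by auto
  define e0 where "e0 p = (\<Sum>b\<in>B. scale (C b p) b)" for p
  have key: "(\<lambda>p. \<Sum>b\<in>B. x q b * C b p) = (\<lambda>p. if q = p then 1 else 0)" for q
  proof (rule basis_unique)
    have "x q h = (\<Sum>p\<in>UNIV. (\<Sum>b\<in>B. x q b * C b p) * x p h)" for h
    proof -
      have "x q h = x q (\<Sum>b\<in>B. scale (r b h) b)" using arg_cong[OF expand[of h], of "x q"] .
      also have "\<dots> = (\<Sum>b\<in>B. r b h * x q b)"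
        by (simp add: lin_sum[OF x_lin] lin_scale[OF x_lin])
      also have "\<dots> = (\<Sum>b\<in>B. \<Sum>p\<in>UNIV. x q b * C b p * x p h)"
        by (rule sum.cong[OF refl]) (simp add: C sum_distrib_right sum_distrib_left mult_ac)
      also have "\<dots> = (\<Sum>p\<in>UNIV. (\<Sum>b\<in>B. x q b * C b p) * x p h)"
        by (subst sum.swap) (simp add: sum_distrib_right)
      finally show ?thesis .
    qed
    moreover have "x q h = (\<Sum>p\<in>UNIV. (if q = p then 1 else 0) * x p h)" for h
    proof -
      have "(\<Sum>p\<in>UNIV. (if q = p then 1 else 0) * x p h) = (\<Sum>p\<in>UNIV. if q = p then x p h else 0)"
        by (rule sum.cong) auto
      then show ?thesis by simp
    qed
    ultimately show "(\<lambda>h. \<Sum>p\<in>UNIV. (\<Sum>b\<in>B. x q b * C b p) * x p h) =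
        (\<lambda>h. \<Sum>p\<in>UNIV. (if q = p then 1 else 0) * x p h)" by metis
  qed
  have "x q (e0 p) = (if q = p then 1 else 0)" for p q
  proof -
    have "x q (e0 p) = (\<Sum>b\<in>B. C b p * x q b)"
      unfolding e0_def by (simp add: lin_sum[OF x_lin] lin_scale[OF x_lin])
    also have "\<dots> = (\<Sum>b\<in>B. x q b * C b p)" by (simp add: mult.commute)
    also have "\<dots> = (if q = p then 1 else 0)" using fun_cong[OF key[of q], of p] .
    finally show ?thesis .
  qed
  then show ?thesis by blast
qed


definition vt :: "'p \<Rightarrow> bool" where "vt p \<longleftrightarrow> x p \<in> dual_part scale Hi Hg"
definition gt :: "'p \<Rightarrow> bool" where "gt p \<longleftrightarrow> x p \<in> dual_part scale Hi Hv"
definition it :: "'p \<Rightarrow> bool" where "it p \<longleftrightarrow> x p \<in> dual_part scale Hv Hg"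

lemma types: "vt p \<or> gt p \<or> it p" using homog unfolding vt_def gt_def it_def by blast

lemma vt_kill: "vt p \<Longrightarrow> h \<in> Hi \<or> h \<in> Hg \<Longrightarrow> x p h = 0"
  unfolding vt_def dual_part_def by auto
lemma gt_kill: "gt p \<Longrightarrow> h \<in> Hi \<or> h \<in> Hv \<Longrightarrow> x p h = 0"
  unfolding gt_def dual_part_def by auto
lemma it_kill: "it p \<Longrightarrow> h \<in> Hv \<or> h \<in> Hg \<Longrightarrow> x p h = 0"
  unfolding it_def dual_part_def by auto

lemma decomp: "\<exists>a b c. a \<in> Hi \<and> b \<in> Hv \<and> c \<in> Hg \<and> h = a + b + c"
proof -
  from dsum have "\<exists>!(a, b, c). a \<in> Hi \<and> b \<in> Hv \<and> c \<in> Hg \<and> h = a + b + c"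
    unfolding direct_sum3_def by blast
  then obtain t where t: "(\<lambda>(a, b, c). a \<in> Hi \<and> b \<in> Hv \<and> c \<in> Hg \<and> h = a + b + c) t"
    by (rule ex1E)
  obtain a b c where "t = (a, b, c)" by (cases t) auto
  with t show ?thesis by blast
qed

lemma x_decomp: "a \<in> Hi \<Longrightarrow> b \<in> Hv \<Longrightarrow> c \<in> Hg \<Longrightarrow> x q (a + b + c) = x q a + x q b + x q c"
  by (simp add: lin_add[OF x_lin])

lemma homog_vectors: "\<exists>e. (\<forall>p q. x q (e p) = (if q = p then 1 else 0)) \<and>
    (\<forall>p. vt p \<longrightarrow> e p \<in> Hv) \<and> (\<forall>p. gt p \<longrightarrow> \<not> vt p \<longrightarrow> e p \<in> Hg) \<and>
    (\<forall>p. \<not> vt p \<longrightarrow> \<not> gt p \<longrightarrow> e p \<in> Hi)"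
proof -
  obtain e0 where e0: "\<And>p q. x q (e0 p) = (if q = p then 1 else 0)" using dual_vectors by blast
  have "\<forall>p. \<exists>a b c. a \<in> Hi \<and> b \<in> Hv \<and> c \<in> Hg \<and> e0 p = a + b + c" using decomp by blast
  then obtain A B C where ABC: "\<And>p. A p \<in> Hi" "\<And>p. B p \<in> Hv" "\<And>p. C p \<in> Hg"
     "\<And>p. e0 p = A p + B p + C p" by metis
  define e where "e p = (if vt p then B p else if gt p then C p else A p)" for p
  have xe: "x q (e0 p) = x q (A p) + x q (B p) + x q (C p)" for p q
    using ABC x_decomp by metis
  have xe2: "x q (A p) + x q (B p) + x q (C p) = (if q = p then 1 else 0)" for p q
    using xe[of q p] e0[of q p] by simp
  have main: "x q (e p) = (if q = p then 1 else 0)" for p q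
  proof (cases "vt p")
    case True
    then have ep: "e p = B p" by (simp add: e_def)
    show ?thesis
    proof (cases "vt q")
      case True
      have "x q (A p) = 0" "x q (C p) = 0" using vt_kill[OF True] ABC(1,3) by blast+
      then show ?thesis using xe2[of q p] ep by simp
    next
      case False
      then have "x q (B p) = 0" using types[of q] gt_kill it_kill ABC(2) by blast
      moreover have "q \<noteq> p" using False \<open>vt p\<close> by blast
      ultimately show ?thesis using ep by simp
    qed
  next
    case nv: False
    show ?thesis
    proof (cases "gt p")
      case True
      then have ep: "e p = C p" using nv by (simp add: e_def)
      show ?thesis
      proof (cases "gt q")
        case True
        have "x q (A p) = 0" "x q (B p) = 0" using gt_kill[OF True] ABC(1,2) by blast+
        then show ?thesis using xe2[of q p] ep by simp
      next
        case False
        then have "x q (C p) = 0" using types[of q] vt_kill it_kill ABC(3) by blast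
        moreover have "q \<noteq> p" using False \<open>gt p\<close> by blast
        ultimately show ?thesis using ep by simp
      qed
    next
      case ng: False
      then have ep: "e p = A p" using nv by (simp add: e_def)
      have itp: "it p" using types[of p] nv ng by blast
      show ?thesis
      proof (cases "it q")
        case True
        have "x q (B p) = 0" "x q (C p) = 0" using it_kill[OF True] ABC(2,3) by blast+
        then show ?thesis using xe2[of q p] ep by simp
      next
        case False
        then have "x q (A p) = 0" using types[of q] vt_kill gt_kill ABC(1) by blast
        moreover have "q \<noteq> p" using False itp by blast
        ultimately show ?thesis using ep by simp
      qed
    qed
  qed
  have h1: "\<forall>p. vt p \<longrightarrow> e p \<in> Hv" using ABC(2) by (simp add: e_def)
  have h2: "\<forall>p. gt p \<longrightarrow> \<not> vt p \<longrightarrow> e p \<in> Hg" using ABC(3) by (simp add: e_def)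
  have h3: "\<forall>p. \<not> vt p \<longrightarrow> \<not> gt p \<longrightarrow> e p \<in> Hi" using ABC(1) by (simp add: e_def)
  have "(\<forall>p q. x q (e p) = (if q = p then 1 else 0)) \<and>
    (\<forall>p. vt p \<longrightarrow> e p \<in> Hv) \<and> (\<forall>p. gt p \<longrightarrow> \<not> vt p \<longrightarrow> e p \<in> Hg) \<and>
    (\<forall>p. \<not> vt p \<longrightarrow> \<not> gt p \<longrightarrow> e p \<in> Hi)" using main h1 h2 h3 by blast
  then show ?thesis by (rule exI[of _ e])
qed

definition ee :: "'p \<Rightarrow> 'h" where
  "ee = (SOME e. (\<forall>p q. x q (e p) = (if q = p then 1 else 0)) \<and>
    (\<forall>p. vt p \<longrightarrow> e p \<in> Hv) \<and> (\<forall>p. gt p \<longrightarrow> \<not> vt p \<longrightarrow> e p \<in> Hg) \<and>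
    (\<forall>p. \<not> vt p \<longrightarrow> \<not> gt p \<longrightarrow> e p \<in> Hi))"

lemma ee_props: "(\<forall>p q. x q (ee p) = (if q = p then 1 else 0)) \<and>
    (\<forall>p. vt p \<longrightarrow> ee p \<in> Hv) \<and> (\<forall>p. gt p \<longrightarrow> \<not> vt p \<longrightarrow> ee p \<in> Hg) \<and>
    (\<forall>p. \<not> vt p \<longrightarrow> \<not> gt p \<longrightarrow> ee p \<in> Hi)"
  unfolding ee_def by (rule someI_ex[OF homog_vectors])

lemma x_ee: "x q (ee p) = (if q = p then 1 else 0)" using ee_props by blast

lemma vt_not_gt: "vt p \<Longrightarrow> \<not> gt p"
proof
  assume v: "vt p" and g: "gt p"
  obtain a b c where abc: "a \<in> Hi" "b \<in> Hv" "c \<in> Hg" "ee p = a + b + c" using decomp by blast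
  have "x p (ee p) = x p a + x p b + x p c" unfolding abc(4) by (rule x_decomp[OF abc(1-3)])
  moreover have "x p a = 0" using vt_kill[OF v] abc(1) by blast
  moreover have "x p b = 0" using gt_kill[OF g] abc(2) by blast
  moreover have "x p c = 0" using vt_kill[OF v] abc(3) by blast
  moreover have "x p (ee p) = 1" using x_ee[of p p] by simp
  ultimately show False by simp
qed

lemma ee_v: "vt p \<Longrightarrow> ee p \<in> Hv" using ee_props by blast
lemma ee_g: "gt p \<Longrightarrow> ee p \<in> Hg" using ee_props vt_not_gt by blast
lemma ee_i: "\<not> vt p \<Longrightarrow> \<not> gt p \<Longrightarrow> ee p \<in> Hi" using ee_props by blast

lemma lin_expand:
  assumes "lin g" shows "g v = (\<Sum>p\<in>UNIV. g (ee p) * x p v)"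
proof -
  obtain c where c: "g = (\<lambda>h. \<Sum>p\<in>UNIV. c p * x p h)"
    using basis_ex[OF assms] by blast
  have "g (ee q) = c q" for q
  proof -
    have "g (ee q) = (\<Sum>p\<in>UNIV. if p = q then c p else 0)"
      unfolding c by (rule sum.cong) (auto simp: x_ee)
    then show ?thesis by simp
  qed
  then show ?thesis using c by simp
qed

end

definition sw :: "nat \<Rightarrow> 'a list \<Rightarrow> 'a list" where
  "sw j l = l[j := l ! Suc j, Suc j := l ! j]"

definition tr :: "nat \<Rightarrow> nat \<Rightarrow> nat" where
  "tr j i = (if i = j then Suc j else if i = Suc j then j else i)"

lemma sw_length [simp]: "length (sw j l) = length l" by (simp add: sw_def)

lemma sw_nth: "Suc j < length l \<Longrightarrow> i < length l \<Longrightarrow> sw j l ! i = l ! (tr j i)"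
  by (auto simp: sw_def tr_def nth_list_update)

lemma tr_tr [simp]: "tr j (tr j i) = i" by (auto simp: tr_def)
lemma tr_less: "Suc j < n \<Longrightarrow> i < n \<Longrightarrow> tr j i < n" by (auto simp: tr_def)

lemma sw_map: "Suc j < length l \<Longrightarrow> map f (sw j l) = sw j (map f l)"
  by (simp add: sw_def map_update)

lemma sw_sw: "Suc j < length l \<Longrightarrow> sw j (sw j l) = l"
  by (rule nth_equalityI) (auto simp: sw_nth tr_less)

lemma mset_sw: "Suc j < length l \<Longrightarrow> mset (sw j l) = mset l"
  unfolding sw_def using mset_swap[of "Suc j" l j] by simp

lemma sw_Cons: "sw (Suc j) (a # l) = a # sw j l"
  by (simp add: sw_def)

lemma sw_0: "sw 0 (a # b # l) = b # a # l"
  by (simp add: sw_def)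

lemma move_front:
  assumes "\<forall>ps j. Suc j < length ps \<longrightarrow> g (sw j ps) = g ps"
  shows "g (as @ p # bs) = g (p # as @ bs)"
  using assms
proof (induction as arbitrary: g)
  case Nil
  then show ?case by simp
next
  case (Cons a as)
  have inv: "\<forall>ps j. Suc j < length ps \<longrightarrow> (\<lambda>ys. g (a # ys)) (sw j ps) = (\<lambda>ys. g (a # ys)) ps"
  proof (intro allI impI)
    fix ps :: "'a list" and j assume "Suc j < length ps"
    then show "(\<lambda>ys. g (a # ys)) (sw j ps) = (\<lambda>ys. g (a # ys)) ps"
      using Cons.prems[rule_format, of "Suc j" "a # ps"] by (simp add: sw_Cons)
  qed
  have "g (a # as @ p # bs) = g (a # p # as @ bs)"
    using Cons.IH[OF inv] by simp
  also have "\<dots> = g (sw 0 (a # p # as @ bs))"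
    using Cons.prems[rule_format, of 0 "a # p # as @ bs"] by simp
  also have "\<dots> = g (p # (a # as) @ bs)" by (simp add: sw_0)
  finally show ?case by simp
qed

lemma perm_inv:
  assumes "\<forall>ps j. Suc j < length ps \<longrightarrow> g (sw j ps) = g ps"
    and "mset ps = mset qs"
  shows "g ps = g qs"
  using assms
proof (induction ps arbitrary: g qs)
  case Nil
  then show ?case by simp
next
  case (Cons p ps)
  have "p \<in># mset qs" using Cons.prems(2)[symmetric] by simp
  then have "p \<in> set qs" by simp
  from split_list[OF this] obtain as bs where qs: "qs = as @ p # bs" by (elim exE)
  have inv: "\<forall>ps j. Suc j < length ps \<longrightarrow> (\<lambda>ys. g (p # ys)) (sw j ps) = (\<lambda>ys. g (p # ys)) ps"
  proof (intro allI impI)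
    fix ps :: "'a list" and j assume "Suc j < length ps"
    then show "(\<lambda>ys. g (p # ys)) (sw j ps) = (\<lambda>ys. g (p # ys)) ps"
      using Cons.prems(1)[rule_format, of "Suc j" "p # ps"] by (simp add: sw_Cons)
  qed
  have "mset ps = mset (as @ bs)" using Cons.prems(2) qs by simp
  then have "g (p # ps) = g (p # as @ bs)" using Cons.IH[OF inv] by simp
  also have "\<dots> = g qs" using move_front[OF Cons.prems(1)] qs by simp
  finally show ?case .
qed

context P5 begin

definition prodx :: "'p list \<Rightarrow> 'h list \<Rightarrow> 'k" where
  "prodx ps ws = (\<Prod>i<length ps. x (ps ! i) (ws ! i))"

lemma prodx_Nil [simp]: "prodx [] ws = 1" by (simp add: prodx_def)
lemma prodx_Cons: "prodx (p # ps) (w # ws) = x p w * prodx ps ws"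
  by (simp only: prodx_def length_Cons prod.lessThan_Suc_shift nth_Cons_0 nth_Cons_Suc)

lemma finL: "finite {ps :: 'p list. length ps = n}"
  using finite_lists_length_eq[of "UNIV :: 'p set" n] by simp

lemma sum_lists_Suc:
  "(\<Sum>qs\<in>{qs :: 'p list. length qs = Suc k}. F qs) =
   (\<Sum>p\<in>UNIV. \<Sum>ps\<in>{ps. length ps = k}. F (p # ps))"
proof -
  have eq: "{qs :: 'p list. length qs = Suc k} = (\<lambda>(p, ps). p # ps) ` (UNIV \<times> {ps. length ps = k})"
    by (auto simp: length_Suc_conv image_iff)
  have inj: "inj_on (\<lambda>(p, ps). p # ps) (UNIV \<times> {ps :: 'p list. length ps = k})"
    by (auto simp: inj_on_def)
  have "(\<Sum>qs\<in>{qs :: 'p list. length qs = Suc k}. F qs) = (\<Sum>(p, ps)\<in>UNIV \<times> {ps. length ps = k}. F (p # ps))"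
    unfolding eq sum.reindex[OF inj] by (rule sum.cong) auto
  also have "\<dots> = (\<Sum>p\<in>UNIV. \<Sum>ps\<in>{ps. length ps = k}. F (p # ps))"
    by (rule sum.cartesian_product[symmetric])
  finally show ?thesis .
qed

lemma multi_expand:
  assumes mf: "multilinear_form scale n f"
  shows "length (us @ ws) = n \<Longrightarrow>
    f (us @ ws) = (\<Sum>ps\<in>{ps. length ps = length ws}. f (us @ map ee ps) * prodx ps ws)"
proof (induction ws arbitrary: us)
  case Nil
  have "{ps :: 'p list. length ps = 0} = {[]}" by auto
  then show ?case by simp
next
  case (Cons w ws)
  have len: "length ((us @ [w]) @ ws) = n" using Cons.prems by simp
  have IH: "f ((us @ [w]) @ ws) = (\<Sum>ps\<in>{ps. length ps = length ws}. f ((us @ [w]) @ map ee ps) * prodx ps ws)"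
    using Cons.IH[OF len] .
  have step: "f (us @ w # map ee ps) = (\<Sum>p\<in>UNIV. f (us @ map ee (p # ps)) * x p w)"
    if "length ps = length ws" for ps
  proof -
    let ?vs = "us @ w # map ee ps"
    have lv: "length ?vs = n" using Cons.prems that by simp
    have lu: "length us < n" using Cons.prems by simp
    have upd: "?vs[length us := v] = us @ v # map ee ps" for v by simp
    have ml: "\<And>vs j. length vs = n \<Longrightarrow> j < n \<Longrightarrow> lin (\<lambda>v. f (vs[j := v]))"
      using mf unfolding multilinear_form_def lin_def by blast
    have "lin (\<lambda>v. f (?vs[length us := v]))" by (rule ml[OF lv lu])
    then have "lin (\<lambda>v. f (us @ v # map ee ps))" by (simp only: upd)
    from lin_expand[OF this, where v=w] show ?thesis by simp
  qed
  have "f (us @ w # ws) = (\<Sum>ps\<in>{ps. length ps = length ws}. f (us @ w # map ee ps) * prodx ps ws)"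
    using IH by simp
  also have "\<dots> = (\<Sum>ps\<in>{ps. length ps = length ws}. \<Sum>p\<in>UNIV. f (us @ map ee (p # ps)) * prodx (p # ps) (w # ws))"
    by (rule sum.cong) (simp_all add: step sum_distrib_right prodx_Cons mult.assoc)
  also have "\<dots> = (\<Sum>p\<in>UNIV. \<Sum>ps\<in>{ps. length ps = length ws}. f (us @ map ee (p # ps)) * prodx (p # ps) (w # ws))"
    by (rule sum.swap)
  also have "\<dots> = (\<Sum>qs\<in>{qs. length qs = length (w # ws)}. f (us @ map ee qs) * prodx qs (w # ws))"
    using sum_lists_Suc[where k="length ws" and F="\<lambda>qs. f (us @ map ee qs) * prodx qs (w # ws)"] by simp
  finally show ?case .
qed

lemma multi_expand0:
  assumes "multilinear_form scale n f" "length ws = n"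
  shows "f ws = (\<Sum>ps\<in>{ps. length ps = n}. f (map ee ps) * prodx ps ws)"
  using multi_expand[OF assms(1), where us="[]" and ws=ws] assms(2) by simp

end

context P5 begin

lemma lin_cmult: "lin f \<Longrightarrow> lin (\<lambda>v. c * f v)"
  by (simp add: lin_iff distrib_left mult.left_commute)

lemma lin_multc: "lin f \<Longrightarrow> lin (\<lambda>v. f v * c)"
  by (simp add: lin_iff distrib_right mult.assoc)

lemma lin_sumf:
  assumes h: "\<And>i. i \<in> I \<Longrightarrow> lin (f i)"
  shows "lin (\<lambda>v. \<Sum>i\<in>I. f i v)"
proof -
  have "(\<Sum>i\<in>I. f i (a + b)) = (\<Sum>i\<in>I. f i a) + (\<Sum>i\<in>I. f i b)" for a b
  proof -
    have "(\<Sum>i\<in>I. f i (a + b)) = (\<Sum>i\<in>I. f i a + f i b)"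
      by (rule sum.cong[OF refl]) (rule lin_add[OF h])
    then show ?thesis by (simp add: sum.distrib)
  qed
  moreover have "(\<Sum>i\<in>I. f i (scale c a)) = c * (\<Sum>i\<in>I. f i a)" for c a
  proof -
    have "(\<Sum>i\<in>I. f i (scale c a)) = (\<Sum>i\<in>I. c * f i a)"
      by (rule sum.cong[OF refl]) (rule lin_scale[OF h])
    then show ?thesis by (simp add: sum_distrib_left)
  qed
  ultimately show ?thesis by (simp add: lin_iff)
qed

lemma prodx_upd:
  assumes "length ps = length ws" "j < length ws"
  shows "prodx ps (ws[j := v]) = x (ps ! j) v * (\<Prod>i\<in>{..<length ps} - {j}. x (ps ! i) (ws ! i))"
proof -
  have "prodx ps (ws[j := v]) = x (ps ! j) (ws[j := v] ! j) *
      (\<Prod>i\<in>{..<length ps} - {j}. x (ps ! i) (ws[j := v] ! i))"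
    unfolding prodx_def using assms by (subst prod.remove[of _ j]) auto
  also have "\<dots> = x (ps ! j) v * (\<Prod>i\<in>{..<length ps} - {j}. x (ps ! i) (ws ! i))"
    using assms by (auto intro!: prod.cong)
  finally show ?thesis .
qed

lemma lin_prodx:
  assumes "length ps = length ws" "j < length ws"
  shows "lin (\<lambda>v. prodx ps (ws[j := v]))"
  unfolding prodx_upd[OF assms] by (rule lin_multc[OF x_lin])

definition cnt :: "'p list \<Rightarrow> 'p \<Rightarrow> nat" where "cnt ps = count (mset ps)"

definition good :: "('p \<Rightarrow> nat) \<Rightarrow> bool" where
  "good m \<longleftrightarrow> \<not> (\<exists>p q. vt p \<and> gt q \<and> m p \<noteq> 0 \<and> m q \<noteq> 0)"

definition coef :: "(('p \<Rightarrow> nat) \<Rightarrow> 'k) \<Rightarrow> 'p list \<Rightarrow> 'k" where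
  "coef a ps = (if good (cnt ps) then a (cnt ps) else 0)"

definition phi :: "(('p \<Rightarrow> nat) \<Rightarrow> 'k) \<Rightarrow> nat \<Rightarrow> 'h list \<Rightarrow> 'k" where
  "phi a n vs = (if length vs = n then (\<Sum>ps\<in>{ps. length ps = n}. coef a ps * prodx ps vs) else 0)"

lemma phi_multi: "multilinear_form scale n (phi a n)"
  unfolding multilinear_form_def
proof (intro conjI allI impI)
  fix vs :: "'h list" assume "length vs \<noteq> n" then show "phi a n vs = 0" by (simp add: phi_def)
next
  fix vs :: "'h list" and j assume l: "length vs = n" and j: "j < n"
  have "lin (\<lambda>v. \<Sum>ps\<in>{ps. length ps = n}. coef a ps * prodx ps (vs[j := v]))"
  proof (rule lin_sumf)
    fix ps :: "'p list" assume "ps \<in> {ps. length ps = n}"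
    then have "length ps = length vs" using l by simp
    then show "lin (\<lambda>v. coef a ps * prodx ps (vs[j := v]))"
      using lin_cmult lin_prodx j l by simp
  qed
  moreover have "phi a n (vs[j := v]) = (\<Sum>ps\<in>{ps. length ps = n}. coef a ps * prodx ps (vs[j := v]))" for v
    using l by (simp add: phi_def)
  ultimately show "Vector_Spaces.linear scale (*) (\<lambda>v. phi a n (vs[j := v]))"
    unfolding lin_def by simp
qed

lemma cnt_sw: "Suc j < length ps \<Longrightarrow> cnt (sw j ps) = cnt ps"
  by (simp add: cnt_def mset_sw)

lemma prodx_sw:
  assumes "length ps = length ws" "Suc j < length ws"
  shows "prodx ps (sw j ws) = prodx (sw j ps) ws"
  unfolding prodx_def
  apply (rule prod.reindex_bij_witness[of _ "tr j" "tr j"])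
  using assms by (auto simp: tr_less sw_nth)

lemma phi_sw:
  assumes "Suc j < length vs"
  shows "phi a n (sw j vs) = phi a n vs"
proof (cases "length vs = n")
  case False
  then show ?thesis by (simp add: phi_def)
next
  case True
  have "(\<Sum>ps\<in>{ps. length ps = n}. coef a ps * prodx ps (sw j vs)) =
        (\<Sum>ps\<in>{ps. length ps = n}. coef a (sw j ps) * prodx (sw j ps) vs)"
  proof (rule sum.cong[OF refl])
    fix ps :: "'p list" assume "ps \<in> {ps. length ps = n}"
    then have l: "length ps = length vs" using True by simp
    have "coef a (sw j ps) = coef a ps" unfolding coef_def using cnt_sw[of j ps] assms l by simp
    then show "coef a ps * prodx ps (sw j vs) = coef a (sw j ps) * prodx (sw j ps) vs"
      using prodx_sw[OF l assms] by simp
  qed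
  also have "\<dots> = (\<Sum>ps\<in>{ps. length ps = n}. coef a ps * prodx ps vs)"
    apply (rule sum.reindex_bij_witness[of _ "sw j" "sw j"])
    using True assms by (auto simp: sw_sw)
  finally show ?thesis using True by (simp add: phi_def)
qed

end

context P5 begin

lemma rho_add: "rho (a + b) = rho a + rho b"
  using rho_lin vs unfolding Vector_Spaces.linear_iff by blast

lemma x_rho:
  assumes "\<not> vt q" shows "x q (rho w) = x q w"
proof -
  obtain a b c where abc: "a \<in> Hi" "b \<in> Hv" "c \<in> Hg" "w = a + b + c" using decomp by blast
  have r: "rho w = a + (- b) + c" using abc rho_i rho_v rho_g by (simp add: rho_add)
  have xb: "x q b = 0" using types[of q] assms gt_kill it_kill abc(2) by blast
  have "x q (rho w) = x q a + x q (- b) + x q c" unfolding r by (simp only: lin_add[OF x_lin])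
  also have "\<dots> = x q a + x q c" using xb lin_neg[OF x_lin] by simp
  also have "\<dots> = x q w" unfolding abc(4) using xb by (simp add: lin_add[OF x_lin])
  finally show ?thesis .
qed

lemma cnt_nz: "i < length ps \<Longrightarrow> cnt ps (ps ! i) \<noteq> 0"
  by (simp add: cnt_def)

lemma prodx_zero: "i < length ps \<Longrightarrow> x (ps ! i) (ws ! i) = 0 \<Longrightarrow> prodx ps ws = 0"
  unfolding prodx_def by (rule prod_zero) auto

lemma phi_rho:
  assumes l: "length vs = n" and j: "Suc j < n" and g: "vs ! j \<in> Hg"
  shows "phi a n (vs[Suc j := rho (vs ! Suc j)]) = phi a n vs"
proof -
  let ?ws = "vs[Suc j := rho (vs ! Suc j)]"
  have eq: "coef a ps * prodx ps ?ws = coef a ps * prodx ps vs" if ps: "length ps = n" for ps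
  proof (cases "coef a ps = 0")
    case True then show ?thesis by simp
  next
    case False
    then have gd: "good (cnt ps)" unfolding coef_def by (auto split: if_splits)
    show ?thesis
    proof (cases "x (ps ! j) (vs ! j) = 0")
      case True
      have "prodx ps ?ws = 0" by (rule prodx_zero[of j]) (use True ps j in auto)
      moreover have "prodx ps vs = 0" by (rule prodx_zero[of j]) (use True ps j in auto)
      ultimately show ?thesis by simp
    next
      case False
      have nv: "\<not> vt (ps ! j)" using False vt_kill g by blast
      have ni: "\<not> it (ps ! j)" using False it_kill g by blast
      have gtj: "gt (ps ! j)" using types[of "ps ! j"] nv ni by blast
      have "\<not> vt (ps ! Suc j)"
      proof
        assume "vt (ps ! Suc j)"
        moreover have "cnt ps (ps ! j) \<noteq> 0" "cnt ps (ps ! Suc j) \<noteq> 0"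
          using cnt_nz ps j by auto
        ultimately show False using gd gtj unfolding good_def by blast
      qed
      then have xr: "x (ps ! Suc j) (rho (vs ! Suc j)) = x (ps ! Suc j) (vs ! Suc j)"
        by (rule x_rho)
      have "prodx ps ?ws = prodx ps vs"
        unfolding prodx_def
      proof (rule prod.cong[OF refl])
        fix i assume "i \<in> {..<length ps}"
        show "x (ps ! i) (?ws ! i) = x (ps ! i) (vs ! i)"
        proof (cases "i = Suc j")
          case True then show ?thesis using xr l j by simp
        next
          case False then show ?thesis by simp
        qed
      qed
      then show ?thesis by simp
    qed
  qed
  have "(\<Sum>ps\<in>{ps. length ps = n}. coef a ps * prodx ps ?ws) = (\<Sum>ps\<in>{ps. length ps = n}. coef a ps * prodx ps vs)"
    by (rule sum.cong[OF refl]) (simp add: eq)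
  then show ?thesis using l unfolding phi_def by simp
qed

lemma phi_braid: "braid_invariant Hi Hv Hg rho n (phi a n)"
  unfolding braid_invariant_def
proof (intro allI impI conjI)
  fix j and vs :: "'h list"
  assume j: "Suc j < n" and l: "length vs = n"
  show "phi a n (vs[j := vs ! Suc j, Suc j := vs ! j]) = phi a n vs"
    using phi_sw[of j vs a n] j l unfolding sw_def by simp
  assume g: "vs ! j \<in> Hg"
  let ?ws = "vs[j := rho (vs ! Suc j), Suc j := vs ! j]"
  have e: "sw j ?ws = vs[Suc j := rho (vs ! Suc j)]"
    by (rule nth_equalityI) (use j l in \<open>auto simp: sw_def nth_list_update\<close>)
  have "phi a n ?ws = phi a n (sw j ?ws)" using phi_sw[of j ?ws a n] j l by simp
  also have "\<dots> = phi a n vs" unfolding e by (rule phi_rho[OF l j g])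
  finally show "phi a n ?ws = phi a n vs" .
qed

lemma phi_Br: "phi a \<in> Br_series scale Hi Hv Hg rho"
  unfolding Br_series_def Br_n_def using phi_multi phi_braid by blast

end

context P5 begin

lemma sum_sp_i: "h \<in> Hi \<Longrightarrow> h \<in> sum_sp Hi Hv"
  unfolding sum_sp_def using V.subspace_0[OF sub_v] by force

lemma sum_sp_v: "h \<in> Hv \<Longrightarrow> h \<in> sum_sp Hi Hv"
proof -
  assume h: "h \<in> Hv"
  have "h = 0 + h" by simp
  then show ?thesis unfolding sum_sp_def using V.subspace_0[OF sub_i] h by blast
qed

lemma rho_ee_nv: "\<not> vt q \<Longrightarrow> rho (ee q) = ee q"
  using ee_g ee_i rho_g rho_i by blast

lemma rho_ee_v: "vt q \<Longrightarrow> rho (ee q) = - ee q"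
  using ee_v rho_v by blast

lemma ee_sum_sp: "\<not> gt q \<Longrightarrow> ee q \<in> sum_sp Hi Hv"
  using ee_v ee_i sum_sp_i sum_sp_v by blast

lemma neg_self_zero: "(c :: 'k) = - c \<Longrightarrow> c = 0"
proof -
  assume h: "c = - c"
  have "c + c = c + - c" using arg_cong[OF h, of "(+) c"] .
  then have "c + c = 0" by (simp only: add.right_inverse)
  then have "2 * c = 0" by (simp only: mult_2)
  then show "c = 0" by simp
qed

lemma Br_sw:
  assumes F: "f \<in> Br_n scale Hi Hv Hg rho n" and js: "Suc j < length ps"
  shows "f (map ee (sw j ps)) = f (map ee ps) \<and> (gt (ps ! j) \<and> vt (ps ! Suc j) \<longrightarrow> f (map ee ps) = 0)"
proof (cases "length ps = n")
  case False
  have mf: "multilinear_form scale n f" using F unfolding Br_n_def by blast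
  have z0: "\<forall>vs. length vs \<noteq> n \<longrightarrow> f vs = 0" using mf unfolding multilinear_form_def by (rule conjunct1)
  have "f (map ee (sw j ps)) = 0" using spec[OF z0, of "map ee (sw j ps)"] False by simp
  moreover have "f (map ee ps) = 0" using spec[OF z0, of "map ee ps"] False by simp
  ultimately show ?thesis by simp
next
  case True
  have mf: "multilinear_form scale n f" and bi: "braid_invariant Hi Hv Hg rho n f"
    using F unfolding Br_n_def by blast+
  have ml: "\<And>ws i. length ws = n \<Longrightarrow> i < n \<Longrightarrow> lin (\<lambda>v. f (ws[i := v]))"
    using mf unfolding multilinear_form_def lin_def by blast
  have jn: "Suc j < n" using js True by simp
  have bi0: "\<forall>j vs. Suc j < n \<longrightarrow> length vs = n \<longrightarrow>
        (vs ! j \<in> sum_sp Hi Hv \<longrightarrow> f (vs[j := vs ! Suc j, Suc j := vs ! j]) = f vs) \<and>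
        (vs ! j \<in> Hg \<longrightarrow> f (vs[j := rho (vs ! Suc j), Suc j := vs ! j]) = f vs)"
    using bi unfolding braid_invariant_def .
  have bi1: "(ws ! j \<in> sum_sp Hi Hv \<longrightarrow> f (ws[j := ws ! Suc j, Suc j := ws ! j]) = f ws) \<and>
        (ws ! j \<in> Hg \<longrightarrow> f (ws[j := rho (ws ! Suc j), Suc j := ws ! j]) = f ws)"
    if "length ws = n" for ws
    using mp[OF mp[OF spec[OF spec[OF bi0, of j], of ws] jn] that] .
  have B1: "f (sw j ws) = f ws" if "length ws = n" "ws ! j \<in> sum_sp Hi Hv" for ws
    unfolding sw_def by (rule mp[OF conjunct1[OF bi1[OF that(1)]] that(2)])
  have B2: "f (ws[j := rho (ws ! Suc j), Suc j := ws ! j]) = f ws" if "length ws = n" "ws ! j \<in> Hg" for ws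
    by (rule mp[OF conjunct2[OF bi1[OF that(1)]] that(2)])
  let ?vs = "map ee ps"
  have lv: "length ?vs = n" using True by simp
  have msw: "map ee (sw j ps) = sw j ?vs" using sw_map[OF js] .
  have vj: "?vs ! j = ee (ps ! j)" using js by simp
  have vsj: "?vs ! Suc j = ee (ps ! Suc j)" using js by simp
  show ?thesis
  proof (cases "gt (ps ! j)")
    case False
    have "f (sw j ?vs) = f ?vs" by (rule B1[OF lv]) (simp add: vj ee_sum_sp[OF False])
    then show ?thesis using msw False by simp
  next
    case gtj: True
    have vg: "?vs ! j \<in> Hg" using vj ee_g[OF gtj] by simp
    have b2: "f (?vs[j := rho (?vs ! Suc j), Suc j := ?vs ! j]) = f ?vs" by (rule B2[OF lv vg])
    show ?thesis
    proof (cases "vt (ps ! Suc j)")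
      case False
      have "?vs[j := rho (?vs ! Suc j), Suc j := ?vs ! j] = sw j ?vs"
        unfolding sw_def vsj rho_ee_nv[OF False] by (rule refl)
      then show ?thesis using b2 msw False by simp
    next
      case vtj: True
      let ?q = "ps ! Suc j"
      let ?us = "sw j ?vs"
      have lu: "length ?us = n" using lv by simp
      have uj: "?us ! j = ee ?q" using js by (simp add: sw_def nth_list_update)
      have e1: "?vs[j := rho (?vs ! Suc j), Suc j := ?vs ! j] = ?us[j := - ee ?q]"
        by (rule nth_equalityI) (use js in \<open>auto simp: sw_def nth_list_update vsj rho_ee_v[OF vtj]\<close>)
      have "lin (\<lambda>v. f (?us[j := v]))" using ml[OF lu] jn by simp
      then have "f (?us[j := - ee ?q]) = - f (?us[j := ee ?q])"
        using lin_neg[of "\<lambda>v. f (?us[j := v])" "ee ?q"] by simp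
      also have "?us[j := ee ?q] = ?us" using list_update_id[of ?us j] uj by simp
      finally have n1: "f ?vs = - f ?us" using b2 e1 by simp
      have "f (sw j ?us) = f ?us"
        by (rule B1[OF lu]) (simp add: uj sum_sp_v ee_v[OF vtj])
      then have n2: "f ?vs = f ?us" using sw_sw[of j ?vs] js by simp
      have "f ?vs = - f ?vs" using n1 unfolding n2[symmetric] .
      then have z: "f ?vs = 0" by (rule neg_self_zero)
      then have "f ?us = 0" using n2 by simp
      then show ?thesis using z msw by simp
    qed
  qed
qed

lemma Br_perm:
  assumes F: "f \<in> Br_n scale Hi Hv Hg rho n" and m: "mset ps = mset qs"
  shows "f (map ee ps) = f (map ee qs)"
proof -
  have "\<forall>ps j. Suc j < length ps \<longrightarrow> (\<lambda>ps. f (map ee ps)) (sw j ps) = (\<lambda>ps. f (map ee ps)) ps"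
  proof (intro allI impI)
    fix ps :: "'p list" and j assume "Suc j < length ps"
    from conjunct1[OF Br_sw[OF F this]]
    show "(\<lambda>ps. f (map ee ps)) (sw j ps) = (\<lambda>ps. f (map ee ps)) ps" by simp
  qed
  from perm_inv[OF this m] show ?thesis by simp
qed

lemma Br_zero:
  assumes F: "f \<in> Br_n scale Hi Hv Hg rho n" and ng: "\<not> good (cnt ps)"
  shows "f (map ee ps) = 0"
proof -
  obtain p q where pq: "vt p" "gt q" "cnt ps p \<noteq> 0" "cnt ps q \<noteq> 0"
    using ng unfolding good_def by blast
  have pin: "p \<in> set ps" and qin: "q \<in> set ps" using pq(3,4) by (simp_all add: cnt_def)
  have neq: "p \<noteq> q" using pq(1,2) vt_not_gt by blast
  let ?L = "remove1 q ps"
  have pL: "p \<in> set ?L" using pin neq by simp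
  define qs where "qs = q # p # remove1 p ?L"
  have pL': "p \<in># mset ?L" using pL by (simp only: set_mset_mset)
  have qps: "q \<in># mset ps" using qin by simp
  have e1: "add_mset p (mset ?L - {#p#}) = mset ?L" by (rule insert_DiffM[OF pL'])
  have e2: "add_mset q (mset ?L) = mset ps" using insert_DiffM[OF qps] by (simp only: mset_remove1)
  have "mset qs = add_mset q (add_mset p (mset ?L - {#p#}))"
    unfolding qs_def by (simp only: mset.simps(2) mset_remove1[of p ?L])
  then have "mset qs = add_mset q (mset ?L)" by (simp only: e1)
  then have "mset qs = mset ps" by (simp only: e2)
  then have m: "mset ps = mset qs" by (rule sym)
  have "f (map ee qs) = 0"
    using Br_sw[OF F, of 0 qs] pq(1,2) unfolding qs_def by simp
  then show ?thesis using Br_perm[OF F m] by simp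
qed

end

context P5 begin

lemma cnt_eq_mset: "cnt ps = cnt qs \<Longrightarrow> mset ps = mset qs"
proof -
  assume h: "cnt ps = cnt qs"
  show "mset ps = mset qs"
  proof (rule multiset_eqI)
    fix y show "count (mset ps) y = count (mset qs) y"
      using fun_cong[OF h, of y] unfolding cnt_def .
  qed
qed

lemma exists_cnt: "\<exists>qs. cnt qs = m"
proof -
  have fin: "finite {y. 0 < m y}" by (rule finite_subset[OF subset_UNIV]) simp
  obtain qs where qs: "mset qs = Abs_multiset m" using ex_mset by blast
  have "cnt qs = m" unfolding cnt_def qs by (rule count_Abs_multiset[OF fin])
  then show ?thesis by blast
qed

definition amap :: "(nat \<Rightarrow> 'h list \<Rightarrow> 'k) \<Rightarrow> ('p \<Rightarrow> nat) \<Rightarrow> 'k" where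
  "amap F m = F (length (SOME ps. cnt ps = m)) (map ee (SOME ps. cnt ps = m))"

lemma surj_phi:
  assumes F: "F \<in> Br_series scale Hi Hv Hg rho"
  shows "phi (amap F) = F"
proof (intro ext)
  fix n vs
  have Fn: "F n \<in> Br_n scale Hi Hv Hg rho n" using F unfolding Br_series_def by blast
  have mf: "multilinear_form scale n (F n)" using Fn unfolding Br_n_def by blast
  show "phi (amap F) n vs = F n vs"
  proof (cases "length vs = n")
    case False
    have z0: "\<forall>vs. length vs \<noteq> n \<longrightarrow> F n vs = 0" using mf unfolding multilinear_form_def by (rule conjunct1)
    have "F n vs = 0" using spec[OF z0, of vs] False by simp
    then show ?thesis using False by (simp add: phi_def)
  next
    case True
    have coefeq: "coef (amap F) ps = F n (map ee ps)" if l: "length ps = n" for ps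
    proof (cases "good (cnt ps)")
      case True
      define ps0 where "ps0 = (SOME qs. cnt qs = cnt ps)"
      have c0: "cnt ps0 = cnt ps" unfolding ps0_def by (rule someI[of "\<lambda>qs. cnt qs = cnt ps" ps]) (rule refl)
      have m0: "mset ps0 = mset ps" using cnt_eq_mset[OF c0] .
      have l0: "length ps0 = n" using l arg_cong[OF m0, of size] by simp
      have "amap F (cnt ps) = F n (map ee ps0)" unfolding amap_def ps0_def[symmetric] l0 ..
      also have "\<dots> = F n (map ee ps)" using Br_perm[OF Fn m0] .
      finally show ?thesis using True by (simp add: coef_def)
    next
      case False
      then show ?thesis using Br_zero[OF Fn False] by (simp add: coef_def)
    qed
    have "F n vs = (\<Sum>ps\<in>{ps. length ps = n}. F n (map ee ps) * prodx ps vs)"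
      by (rule multi_expand0[OF mf True])
    also have "\<dots> = (\<Sum>ps\<in>{ps. length ps = n}. coef (amap F) ps * prodx ps vs)"
      by (rule sum.cong[OF refl]) (simp add: coefeq)
    finally show ?thesis using True by (simp add: phi_def)
  qed
qed

lemma prodx_ee:
  assumes l: "length ps = length qs"
  shows "prodx ps (map ee qs) = (if ps = qs then 1 else 0)"
proof -
  have eq: "prodx ps (map ee qs) = (\<Prod>i<length ps. if ps ! i = qs ! i then 1 else 0)"
    unfolding prodx_def using l by (intro prod.cong) (auto simp: x_ee)
  show ?thesis
  proof (cases "ps = qs")
    case True then show ?thesis using eq by simp
  next
    case False
    then obtain i where i: "i < length ps" "ps ! i \<noteq> qs ! i"
      using l nth_equalityI[of ps qs] by blast
    have "(\<Prod>i<length ps. if ps ! i = qs ! i then 1 else (0::'k)) = 0"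
      by (rule prod_zero) (use i in auto)
    then show ?thesis using eq False by simp
  qed
qed

lemma phi_ee: "phi a (length qs) (map ee qs) = coef a qs"
proof -
  have "(\<Sum>ps\<in>{ps. length ps = length qs}. coef a ps * prodx ps (map ee qs)) =
        (\<Sum>ps\<in>{ps. length ps = length qs}. if ps = qs then coef a ps else 0)"
    by (rule sum.cong[OF refl]) (simp add: prodx_ee)
  also have "\<dots> = coef a qs" using finL by (simp add: sum.delta)
  finally show ?thesis by (simp add: phi_def)
qed

definition J0 :: "(('p \<Rightarrow> nat) \<Rightarrow> 'k) set" where
  "J0 = {a. \<forall>m. good m \<longrightarrow> a m = 0}"

lemma phi_zero_iff: "phi a = (\<lambda>n vs. 0) \<longleftrightarrow> a \<in> J0"
proof
  assume z: "phi a = (\<lambda>n vs. 0)"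
  show "a \<in> J0" unfolding J0_def
  proof (intro CollectI allI impI)
    fix m :: "'p \<Rightarrow> nat" assume g: "good m"
    obtain qs where qs: "cnt qs = m" using exists_cnt by blast
    have "coef a qs = 0" using phi_ee[of a qs] z by simp
    then show "a m = 0" using g qs by (simp add: coef_def)
  qed
next
  assume "a \<in> J0"
  then have "coef a ps = 0" for ps unfolding J0_def coef_def by simp
  then show "phi a = (\<lambda>n vs. 0)" by (intro ext) (simp add: phi_def)
qed

end

context P5 begin

definition dd :: "'p \<Rightarrow> 'p \<Rightarrow> 'p \<Rightarrow> nat" where
  "dd p q = (\<lambda>s. (if s = p then 1 else 0) + (if s = q then 1 else 0))"

lemma X2_eq: "mps_X2 p q m = (if m = dd p q then 1 else 0)"
  by (simp add: mps_X2_def dd_def)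

lemma good_minus:
  assumes "good m" shows "good (\<lambda>p. m p - m1 p)"
  unfolding good_def
proof
  assume "\<exists>p q. vt p \<and> gt q \<and> m p - m1 p \<noteq> 0 \<and> m q - m1 q \<noteq> 0"
  then obtain p q where pq: "vt p" "gt q" "m p - m1 p \<noteq> 0" "m q - m1 q \<noteq> 0" by blast
  then have "m p \<noteq> 0" "m q \<noteq> 0" by auto
  then show False using assms pq(1,2) unfolding good_def by blast
qed

lemma dd_not_good: "vt p \<Longrightarrow> gt q \<Longrightarrow> \<not> good (dd p q)"
  unfolding good_def dd_def by auto

lemma finD: "finite {m1 :: 'p \<Rightarrow> nat. \<forall>p. m1 p \<le> m p}"
proof -
  define M where "M = Max (range m)"
  have "m p \<le> M" for p unfolding M_def by (rule Max_ge) auto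
  then have "{m1 :: 'p \<Rightarrow> nat. \<forall>p. m1 p \<le> m p} \<subseteq>
      {f. \<forall>y. (y \<in> UNIV \<longrightarrow> f y \<in> {..M}) \<and> (y \<notin> UNIV \<longrightarrow> f y = 0)}"
    using order_trans by fastforce
  moreover have "finite {f :: 'p \<Rightarrow> nat. \<forall>y. (y \<in> UNIV \<longrightarrow> f y \<in> {..M}) \<and> (y \<notin> UNIV \<longrightarrow> f y = 0)}"
    by (rule finite_set_of_finite_funs) auto
  ultimately show ?thesis by (rule finite_subset)
qed

lemma J0_ideal: "mps_ideal J0"
  unfolding mps_ideal_def
proof (intro conjI ballI allI)
  show "(\<lambda>_. 0) \<in> J0" unfolding J0_def by simp
next
  fix a b assume "a \<in> J0" "b \<in> J0"
  then show "mps_add a b \<in> J0" unfolding J0_def mps_add_def by simp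
next
  fix a r assume a: "a \<in> J0"
  show "mps_mult r a \<in> J0" unfolding J0_def
  proof (intro CollectI allI impI)
    fix m :: "'p \<Rightarrow> nat" assume g: "good m"
    have "mps_mult r a m = (\<Sum>m1 \<in> {m1. \<forall>p. m1 p \<le> m p}. r m1 * 0)"
      unfolding mps_mult_def
      by (rule sum.cong[OF refl]) (use a good_minus[OF g] in \<open>simp add: J0_def\<close>)
    then show "mps_mult r a m = 0" by simp
  qed
qed

lemma X2_J0: "vt p \<Longrightarrow> gt q \<Longrightarrow> mps_X2 p q \<in> J0"
  unfolding J0_def X2_eq using dd_not_good by auto

lemma gens_eq: "{mps_X2 p q | p q. x p \<in> dual_part scale Hi Hg \<and> x q \<in> dual_part scale Hi Hv} =
   {mps_X2 p q | p q. vt p \<and> gt q}"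
  unfolding vt_def gt_def ..

lemma I_sub_J0: "ideal_I x scale Hi Hv Hg \<subseteq> J0"
  unfolding ideal_I_def mps_ideal_gen_def gens_eq
  by (rule Inter_lower) (use J0_ideal X2_J0 in blast)

lemma ideal_sum:
  assumes J: "mps_ideal J" and fin: "finite P"
  shows "(\<forall>t\<in>P. T t \<in> J) \<Longrightarrow> (\<lambda>m. \<Sum>t\<in>P. T t m) \<in> J"
  using fin
proof (induction P rule: finite_induct)
  case empty
  then show ?case using J unfolding mps_ideal_def by simp
next
  case (insert t P)
  have "(\<lambda>m. \<Sum>t\<in>insert t P. T t m) = mps_add (T t) (\<lambda>m. \<Sum>t\<in>P. T t m)"
    using insert.hyps by (simp add: mps_add_def)
  moreover have "T t \<in> J" using insert.prems by simp
  moreover have "(\<lambda>m. \<Sum>t\<in>P. T t m) \<in> J" using insert.IH insert.prems by simp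
  ultimately show ?case using J unfolding mps_ideal_def by simp
qed

lemma mult_X2:
  "mps_mult r (mps_X2 p q) m = (if (\<forall>s. dd p q s \<le> m s) then r (\<lambda>s. m s - dd p q s) else 0)"
proof -
  let ?D = "{m1 :: 'p \<Rightarrow> nat. \<forall>s. m1 s \<le> m s}"
  let ?m0 = "\<lambda>s. m s - dd p q s"
  have key: "((\<lambda>s. m s - m1 s) = dd p q) \<longleftrightarrow> (m1 = ?m0 \<and> (\<forall>s. dd p q s \<le> m s))"
    if "m1 \<in> ?D" for m1
  proof
    assume h: "(\<lambda>s. m s - m1 s) = dd p q"
    have hs: "m s - m1 s = dd p q s" for s using fun_cong[OF h, of s] by simp
    have le: "m1 s \<le> m s" for s using that by simp
    show "m1 = ?m0 \<and> (\<forall>s. dd p q s \<le> m s)"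
    proof
      show "m1 = ?m0"
      proof
        fix s show "m1 s = m s - dd p q s" using hs[of s] le[of s] by simp
      qed
      show "\<forall>s. dd p q s \<le> m s" using hs by (metis diff_le_self)
    qed
  next
    assume h: "m1 = ?m0 \<and> (\<forall>s. dd p q s \<le> m s)"
    show "(\<lambda>s. m s - m1 s) = dd p q"
    proof
      fix s show "m s - m1 s = dd p q s" using h by simp
    qed
  qed
  have "mps_mult r (mps_X2 p q) m = (\<Sum>m1\<in>?D. if m1 = ?m0 \<and> (\<forall>s. dd p q s \<le> m s) then r m1 else 0)"
    unfolding mps_mult_def X2_eq
  proof (rule sum.cong[OF refl])
    fix m1 assume "m1 \<in> ?D"
    from key[OF this]
    show "r m1 * (if (\<lambda>s. m s - m1 s) = dd p q then 1 else 0) =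
          (if m1 = ?m0 \<and> (\<forall>s. dd p q s \<le> m s) then r m1 else 0)" by simp
  qed
  also have "\<dots> = (if (\<forall>s. dd p q s \<le> m s) then r ?m0 else 0)"
  proof (cases "\<forall>s. dd p q s \<le> m s")
    case True
    have t: "(\<forall>s. dd p q s \<le> m s) = True" using True by simp
    have "?m0 \<in> ?D" by simp
    then show ?thesis using finD[of m] by (simp only: t simp_thms if_True) (simp add: sum.delta)
  next
    case False
    have f: "(\<forall>s. dd p q s \<le> m s) = False" using False by simp
    show ?thesis by (simp only: f simp_thms if_False) simp
  qed
  finally show ?thesis .
qed

definition sel :: "('p \<Rightarrow> nat) \<Rightarrow> 'p \<times> 'p" where
  "sel m = (SOME pq. vt (fst pq) \<and> gt (snd pq) \<and> m (fst pq) \<noteq> 0 \<and> m (snd pq) \<noteq> 0)"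

lemma J0_sub_I:
  assumes a: "a \<in> J0"
  shows "a \<in> ideal_I x scale Hi Hv Hg"
  unfolding ideal_I_def mps_ideal_gen_def gens_eq
proof (rule InterI)
  fix J :: "(('p \<Rightarrow> nat) \<Rightarrow> 'k) set" assume "J \<in> {J. mps_ideal J \<and> {mps_X2 p q | p q. vt p \<and> gt q} \<subseteq> J}"
  then have J: "mps_ideal J" and gJ: "\<And>p q. vt p \<Longrightarrow> gt q \<Longrightarrow> mps_X2 p q \<in> J" by blast+
  define P where "P = {pq :: 'p \<times> 'p. vt (fst pq) \<and> gt (snd pq)}"
  define r where "r pq m' = (if sel (\<lambda>s. m' s + dd (fst pq) (snd pq) s) = pq
      then a (\<lambda>s. m' s + dd (fst pq) (snd pq) s) else 0)" for pq m'
  define T where "T pq = mps_mult (r pq) (mps_X2 (fst pq) (snd pq))" for pq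
  have finP: "finite P" by (rule finite_subset[OF subset_UNIV]) simp
  have TJ: "\<forall>t\<in>P. T t \<in> J"
  proof
    fix t assume "t \<in> P"
    then have "mps_X2 (fst t) (snd t) \<in> J" using gJ unfolding P_def by blast
    then show "T t \<in> J" using J unfolding mps_ideal_def T_def by blast
  qed
  have Tm: "T pq m = (if (\<forall>s. dd (fst pq) (snd pq) s \<le> m s) \<and> sel m = pq then a m else 0)" for pq m
  proof (cases "\<forall>s. dd (fst pq) (snd pq) s \<le> m s")
    case True
    have "(\<lambda>s. (m s - dd (fst pq) (snd pq) s) + dd (fst pq) (snd pq) s) = m"
      using True by (simp add: fun_eq_iff)
    then show ?thesis using True unfolding T_def mult_X2 r_def by simp
  next
    case False
    have f: "(\<forall>s. dd (fst pq) (snd pq) s \<le> m s) = False" using False by simp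
    show ?thesis unfolding T_def mult_X2 by (simp only: f simp_thms if_False)
  qed
  have "a = (\<lambda>m. \<Sum>t\<in>P. T t m)"
  proof
    fix m :: "'p \<Rightarrow> nat"
    show "a m = (\<Sum>t\<in>P. T t m)"
    proof (cases "good m")
      case True
      have am: "a m = 0" using a True unfolding J0_def by blast
      have "T t m = 0" for t using am Tm[of t m] by simp
      then show ?thesis using am by simp
    next
      case False
      then have ex: "\<exists>pq. vt (fst pq) \<and> gt (snd pq) \<and> m (fst pq) \<noteq> 0 \<and> m (snd pq) \<noteq> 0"
        unfolding good_def by auto
      let ?pq = "sel m"
      have s: "vt (fst ?pq) \<and> gt (snd ?pq) \<and> m (fst ?pq) \<noteq> 0 \<and> m (snd ?pq) \<noteq> 0"
        unfolding sel_def by (rule someI_ex[OF ex])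
      have neq: "fst ?pq \<noteq> snd ?pq" using s vt_not_gt by metis
      have le: "\<forall>s. dd (fst ?pq) (snd ?pq) s \<le> m s"
        using s neq unfolding dd_def by auto
      have inP: "?pq \<in> P" using s unfolding P_def by simp
      have "T t m = (if t = ?pq then a m else 0)" if "t \<in> P" for t
        using Tm[of t m] le by auto
      then have "(\<Sum>t\<in>P. T t m) = (\<Sum>t\<in>P. if t = ?pq then a m else 0)"
        by (intro sum.cong) auto
      also have "\<dots> = a m" using finP inP by (simp add: sum.delta')
      finally show ?thesis by simp
    qed
  qed
  then show "a \<in> J" using ideal_sum[OF J finP TJ] by simp
qed

lemma I_eq_J0: "ideal_I x scale Hi Hv Hg = J0"
  using I_sub_J0 J0_sub_I by blast

lemma coef_add: "coef (mps_add a b) ps = coef a ps + coef b ps"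
  by (simp add: coef_def mps_add_def)

lemma coef_smult: "coef (\<lambda>m. c * a m) ps = c * coef a ps"
  by (simp add: coef_def)

lemma main:
  "\<exists>\<phi> :: ('p, 'k) mps \<Rightarrow> (nat \<Rightarrow> 'h list \<Rightarrow> 'k).
           (\<forall>a b. \<phi> (mps_add a b) = (\<lambda>n vs. \<phi> a n vs + \<phi> b n vs)) \<and>
           (\<forall>c a. \<phi> (\<lambda>m. c * a m) = (\<lambda>n vs. c * \<phi> a n vs)) \<and>
           \<phi> ` UNIV = Br_series scale Hi Hv Hg rho \<and>
           (\<forall>a. \<phi> a = (\<lambda>n vs. 0) \<longleftrightarrow> a \<in> ideal_I x scale Hi Hv Hg)"
proof (intro exI[of _ phi] conjI allI)
  fix a b
  show "phi (mps_add a b) = (\<lambda>n vs. phi a n vs + phi b n vs)"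
    by (intro ext) (simp add: phi_def coef_add distrib_right sum.distrib)
next
  fix c a
  show "phi (\<lambda>m. c * a m) = (\<lambda>n vs. c * phi a n vs)"
    by (intro ext) (simp add: phi_def coef_smult sum_distrib_left mult.assoc)
next
  show "range phi = Br_series scale Hi Hv Hg rho"
  proof
    show "range phi \<subseteq> Br_series scale Hi Hv Hg rho" using phi_Br by blast
    show "Br_series scale Hi Hv Hg rho \<subseteq> range phi"
    proof
      fix F assume "F \<in> Br_series scale Hi Hv Hg rho"
      then have "F = phi (amap F)" using surj_phi by simp
      then show "F \<in> range phi" by blast
    qed
  qed
next
  fix a
  show "phi a = (\<lambda>n vs. 0) \<longleftrightarrow> a \<in> ideal_I x scale Hi Hv Hg"
    using phi_zero_iff I_eq_J0 by simp
qed

end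

theorem proposition5p2:
  fixes scale :: "'k::field_char_0 \<Rightarrow> 'h::ab_group_add \<Rightarrow> 'h"
    and Hi Hv Hg :: "'h set"
    and rho :: "'h \<Rightarrow> 'h"
    and x :: "'p::finite \<Rightarrow> 'h \<Rightarrow> 'k"
  assumes vs: "vector_space scale"
    and fin: "\<exists>B. finite B \<and> module.span scale B = UNIV"
    and sub_i: "module.subspace scale Hi"
    and sub_v: "module.subspace scale Hv"
    and sub_g: "module.subspace scale Hg"
    and dsum: "direct_sum3 Hi Hv Hg"
    and rho_lin: "Vector_Spaces.linear scale scale rho"
    and rho_i: "\<forall>h\<in>Hi. rho h = h"
    and rho_v: "\<forall>h\<in>Hv. rho h = - h"
    and rho_g: "\<forall>h\<in>Hg. rho h = h"
    and basis: "dual_basis scale x"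
    and homog: "\<forall>p. x p \<in> dual_part scale Hv Hg \<or> x p \<in> dual_part scale Hi Hg
                    \<or> x p \<in> dual_part scale Hi Hv"
  shows "\<exists>\<phi> :: ('p, 'k) mps \<Rightarrow> (nat \<Rightarrow> 'h list \<Rightarrow> 'k).
           (\<forall>a b. \<phi> (mps_add a b) = (\<lambda>n vs. \<phi> a n vs + \<phi> b n vs)) \<and>
           (\<forall>c a. \<phi> (\<lambda>m. c * a m) = (\<lambda>n vs. c * \<phi> a n vs)) \<and>
           \<phi> ` UNIV = Br_series scale Hi Hv Hg rho \<and>
           (\<forall>a. \<phi> a = (\<lambda>n vs. 0) \<longleftrightarrow> a \<in> ideal_I x scale Hi Hv Hg)"
  proof -
  have "P5 scale Hi Hv Hg rho x"
    by (rule P5.intro) (rule vs fin sub_i sub_v sub_g dsum rho_lin rho_i rho_v rho_g basis homog)+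
  then show ?thesis by (rule P5.main)
qed

end
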